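(* Let $n,q$ be positive integers. For any $\kappa_1,\kappa_2\in\{0,1,\ldots,q-1\}^n$ with $\kappa_1\neq\kappa_2$, there exists a word $w\in\{x,y\}^*$ such that $f(g(\kappa_1)w)=0$ and $f(g(\kappa_2)w)\neq 0$.
   Context: Fix positive integers $n,q$. Define $f:\{x,y\}^*\to\{0,1,\ldots,q-1\}$ as follows: for $w\in\{x,y\}^*$, if $w$ has at most $n$ occurrences of the letter $x$, let $w'=w$; otherwise take the $(n+1)$-st occurrence of $x$ counted from the right end of $w$, erase it and everything to its left, and let $w'$ be the remaining word. Then $f(w)$ is the number of occurrences of $y$ in $w'$, taken modulo $q$. Define $g:\{0,1,\ldots,q-1\}^n\to\{x,y\}^*$ by $g(i_1,i_2,\ldots,i_n)=x y^{i_1} x y^{i_2}\cdots x y^{i_n}$. *)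

theory Defs
  imports Main
begin

datatype letter = X | Y

fun rsuf :: "nat \<Rightarrow> letter list \<Rightarrow> letter list" where
  "rsuf k [] = []"
| "rsuf k (Y # r) = Y # rsuf k r"
| "rsuf 0 (X # r) = []"
| "rsuf (Suc k) (X # r) = X # rsuf k r"

text \<open>w' : w itself if it has at most n X's, otherwise the part strictly to the right
  of the (n+1)-st X counted from the right end.\<close>
definition wprime :: "nat \<Rightarrow> letter list \<Rightarrow> letter list" where
  "wprime n w = rev (rsuf n (rev w))"

definition f :: "nat \<Rightarrow> nat \<Rightarrow> letter list \<Rightarrow> nat" where
  "f n q w = count_list (wprime n w) Y mod q"

definition g :: "nat list \<Rightarrow> letter list" where
  "g is = concat (map (\<lambda>i. X # replicate i Y) is)"

end

theory Submission
  imports Defs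
begin

lemma rsuf_app: "rsuf (count_list u X + k) (u @ r) = u @ rsuf k r"
proof (induction u arbitrary: k)
  case Nil then show ?case by simp
next
  case (Cons a u)
  show ?case
  proof (cases a)
    case X
    have "count_list (a # u) X + k = Suc (count_list u X + k)" using X by simp
    then show ?thesis using Cons X by simp
  next
    case Y then show ?thesis using Cons by simp
  qed
qed

lemma cl_rep[simp]: "count_list (replicate m a) b = (if a = b then m else 0)"
  by (induction m) auto

lemma g_cons: "g (c # s) = X # replicate c Y @ g s"
  by (simp add: g_def)

lemma g_app: "g (a @ b) = g a @ g b"
  by (simp add: g_def)

lemma g_cX: "count_list (g s) X = length s"
  by (induction s) (auto simp: g_def)

lemma g_cY: "count_list (g s) Y = sum_list s"
  by (induction s) (auto simp: g_def)

lemma split_rev: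
  "length r1 = length r2 \<Longrightarrow> r1 \<noteq> r2 \<Longrightarrow>
     \<exists>a1 a2 c1 c2 s. r1 = s @ c1 # a1 \<and> r2 = s @ c2 # a2 \<and> c1 \<noteq> c2 \<and> length a1 = length a2"
proof (induction r1 r2 rule: list_induct2)
  case Nil then show ?case by simp
next
  case (Cons x xs y ys)
  show ?case
  proof (cases "x = y")
    case True
    then have "xs \<noteq> ys" using Cons by simp
    then obtain a1 a2 c1 c2 s where "xs = s @ c1 # a1 \<and> ys = s @ c2 # a2 \<and> c1 \<noteq> c2 \<and> length a1 = length a2"
      using Cons by blast
    then show ?thesis using True by (metis append_Cons)
  next
    case False
    then show ?thesis using Cons(1) by (metis append_Nil)
  qed
qed

lemma split_diff:
  assumes "length k1 = length k2" "k1 \<noteq> k2"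
  shows "\<exists>a1 a2 c1 c2 s. k1 = a1 @ c1 # s \<and> k2 = a2 @ c2 # s \<and> c1 \<noteq> c2 \<and> length a1 = length a2"
proof -
  note split_rev
  from this[of "rev k1" "rev k2"] assms obtain a1 a2 c1 c2 s where
    h: "rev k1 = s @ c1 # a1" "rev k2 = s @ c2 # a2" "c1 \<noteq> c2" "length a1 = length a2"
    by auto
  have "k1 = rev a1 @ c1 # rev s" using h(1) by (metis rev_append rev_rev_ident append_assoc rev.simps(2) append_Cons append_Nil)
  moreover have "k2 = rev a2 @ c2 # rev s" using h(2) by (metis rev_append rev_rev_ident append_assoc rev.simps(2) append_Cons append_Nil)
  ultimately show ?thesis using h by (intro exI[of _ "rev a1"] exI[of _ "rev a2"] exI[of _ c1] exI[of _ c2] exI[of _ "rev s"]) simp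
qed

lemma key:
  assumes "length a + 1 + length s = n"
  shows "count_list (wprime n (g (a @ c # s) @ replicate (length a + 1) X @ replicate m Y)) Y
         = m + sum_list s + c"
proof -
  define u where "u = replicate m Y @ replicate (length a + 1) X @ rev (g s) @ replicate c Y"
  have cu: "count_list u X = n" using assms by (simp add: u_def g_cX)
  have "rev (g (a @ c # s) @ replicate (length a + 1) X @ replicate m Y) = u @ X # rev (g a)"
    by (simp add: u_def g_app g_cons replicate_append_same)
  then have "wprime n (g (a @ c # s) @ replicate (length a + 1) X @ replicate m Y) = rev u"
    using rsuf_app[of u 0 "X # rev (g a)"] cu by (simp add: wprime_def)
  then show ?thesis by (simp add: u_def g_cY)
qed

theorem lemma3:
  fixes n q :: nat and k1 k2 :: "nat list"
  assumes "n > 0" and "q > 0"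
    and "length k1 = n" and "\<forall>i\<in>set k1. i < q"
    and "length k2 = n" and "\<forall>i\<in>set k2. i < q"
    and "k1 \<noteq> k2"
  shows "\<exists>w :: letter list. f n q (g k1 @ w) = 0 \<and> f n q (g k2 @ w) \<noteq> 0"
proof -
  obtain a1 a2 c1 c2 s where h: "k1 = a1 @ c1 # s" "k2 = a2 @ c2 # s" "c1 \<noteq> c2" "length a1 = length a2"
    using split_diff assms by (metis)
  have l1: "length a1 + 1 + length s = n" using h assms by simp
  have l2: "length a2 + 1 + length s = n" using h assms by simp
  have c1q: "c1 < q" and c2q: "c2 < q" using h assms by auto
  define T where "T = sum_list s"
  define m where "m = q - (c1 + T) mod q"
  define w where "w = replicate (length a1 + 1) X @ replicate m Y"
  have w2: "w = replicate (length a2 + 1) X @ replicate m Y" using h w_def by simp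
  have f1: "f n q (g k1 @ w) = (m + T + c1) mod q"
    using key[OF l1, of c1 m] h(1) by (simp add: f_def w_def T_def)
  have f2: "f n q (g k2 @ w) = (m + T + c2) mod q"
    using key[OF l2, of c2 m] h(2) w2 by (simp add: f_def T_def)
  have z: "(m + T + c1) mod q = 0"
  proof -
    have "(c1 + T) mod q < q" using assms(2) by simp
    then have "m + T + c1 = q + ((c1 + T) - (c1 + T) mod q)" unfolding m_def by simp
    moreover have "q dvd ((c1 + T) - (c1 + T) mod q)" by (simp add: minus_mod_eq_mult_div)
    ultimately show ?thesis by (metis dvd_add dvd_imp_mod_0 dvd_refl)
  qed
  have "(m + T + c2) mod q \<noteq> 0"
  proof
    assume "(m + T + c2) mod q = 0"
    then have d2: "q dvd (m + T + c2)" by auto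
    have d1: "q dvd (m + T + c1)" using z by auto
    show False
    proof (cases "c1 < c2")
      case True
      have "q dvd (m + T + c2) - (m + T + c1)" using dvd_diff_nat[OF d2 d1] .
      moreover have "(m + T + c2) - (m + T + c1) = c2 - c1" by simp
      ultimately have "q dvd (c2 - c1)" by simp
      then show False using True c2q by (simp add: nat_dvd_not_less)
    next
      case False
      then have lt: "c2 < c1" using h(3) by simp
      have "q dvd (m + T + c1) - (m + T + c2)" using dvd_diff_nat[OF d1 d2] .
      moreover have "(m + T + c1) - (m + T + c2) = c1 - c2" by simp
      ultimately have "q dvd (c1 - c2)" by simp
      then show False using lt c1q by (simp add: nat_dvd_not_less)
    qed
  qed
  then show ?thesis using f1 f2 z by metis
qed

end
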